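(* Let $\mathcal{K}$ be a continuous unitary representation of $\overline{\mathfrak{S}}_\infty$ in a Hilbert space $\mathcal{H}$, let $n,k\ge 1$ be integers, let $P_n$ be the weak-operator limit of $\mathcal{K}({}^n\sigma_m)$ as $m\to\infty$, and let $O_k$ be the weak-operator limit of $\mathcal{K}((k\;\;N))$ as $N\to\infty$. Let $\mathfrak{S}(k,n,\infty)$ be the subgroup of $\overline{\mathfrak{S}}_\infty$ generated by the transposition $(k\;\;n+1)$ and the subgroup $\mathfrak{S}(n,\infty)$. Then $O_kP_n$ is the self-adjoint (orthogonal) projection onto the subspace $\{\eta\in\mathcal{H}: \mathcal{K}(s)\eta=\eta \text{ for all } s\in\mathfrak{S}(k,n,\infty)\}$. In particular, $O_nP_n=P_{n-1}$.
   Context: $\overline{\mathfrak{S}}_\infty$ is the group of all bijections of $\mathbb{N}$, with the Polish topology in which the subgroups $\mathfrak{S}(n,\infty)=\{s: s(j)=j \text{ for } j=1,\dots,n\}$ form a fundamental system of neighborhoods of the identity; continuity of $\mathcal{K}$ means $\lim_{n\to\infty}\sup_{s\in\mathfrak{S}(n,\infty)}\|\mathcal{K}(s)\eta-\eta\|=0$ for each $\eta\in\mathcal{H}$. $(k\;j)$ denotes the transposition of $k$ and $j$, and ${}^n\sigma_m=(n+1\;\;n+m+1)(n+2\;\;n+m+2)\cdots(n+m\;\;n+2m)$. The weak-operator limits $P_n$ and $O_k$ exist and are self-adjoint projections; $P_{n-1}$ is defined analogously with $n-1$ in place of $n$. *)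

theory Defs
  imports "HOL-Analysis.Analysis" "HOL-Combinatorics.Transposition"
begin

text \<open>Bijections of the positive integers {1,2,...}, realised as bijections of nat fixing 0.\<close>
definition Sinf :: "(nat \<Rightarrow> nat) set" where
  "Sinf = {s. bij s \<and> s 0 = 0}"

definition Sfix :: "nat \<Rightarrow> (nat \<Rightarrow> nat) set" where
  "Sfix n = {s \<in> Sinf. \<forall>j\<in>{1..n}. s j = j}"

definition sigma :: "nat \<Rightarrow> nat \<Rightarrow> nat \<Rightarrow> nat" where
  "sigma n m = foldr (\<circ>) (map (\<lambda>i. Transposition.transpose (n + i) (n + m + i)) [1..<m+1]) id"

inductive_set gen_subgroup :: "(nat \<Rightarrow> nat) set \<Rightarrow> (nat \<Rightarrow> nat) set" for A where
  gen_id: "id \<in> gen_subgroup A"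
| gen_base: "s \<in> A \<Longrightarrow> s \<in> gen_subgroup A"
| gen_comp: "s \<in> gen_subgroup A \<Longrightarrow> t \<in> gen_subgroup A \<Longrightarrow> s \<circ> t \<in> gen_subgroup A"
| gen_inv: "s \<in> gen_subgroup A \<Longrightarrow> inv s \<in> gen_subgroup A"

definition Sfix2 :: "nat \<Rightarrow> nat \<Rightarrow> (nat \<Rightarrow> nat) set" where
  "Sfix2 k n = gen_subgroup (insert (Transposition.transpose k (n + 1)) (Sfix n))"

definition unitary_rep :: "((nat \<Rightarrow> nat) \<Rightarrow> 'a::{real_inner,complete_space} \<Rightarrow> 'a) \<Rightarrow> bool" where
  "unitary_rep K \<longleftrightarrow>
     K id = id \<and>
     (\<forall>s\<in>Sinf. \<forall>t\<in>Sinf. K (s \<circ> t) = K s \<circ> K t) \<and>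
     (\<forall>s\<in>Sinf. bounded_linear (K s) \<and> surj (K s) \<and> (\<forall>x. norm (K s x) = norm x))"

text \<open>Continuity in the Polish topology of Sinf.\<close>
definition continuous_rep :: "((nat \<Rightarrow> nat) \<Rightarrow> 'a::real_normed_vector \<Rightarrow> 'a) \<Rightarrow> bool" where
  "continuous_rep K \<longleftrightarrow>
     (\<forall>\<eta>. (\<lambda>n. SUP s\<in>Sfix n. norm (K s \<eta> - \<eta>)) \<longlonglongrightarrow> 0)"

definition weak_op_limit :: "(nat \<Rightarrow> 'a::real_inner \<Rightarrow> 'a) \<Rightarrow> ('a \<Rightarrow> 'a) \<Rightarrow> bool" where
  "weak_op_limit A B \<longleftrightarrow> (\<forall>\<eta> \<xi>. (\<lambda>m. inner (A m \<eta>) \<xi>) \<longlonglongrightarrow> inner (B \<eta>) \<xi>)"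

definition sa_projection_onto :: "('a::real_inner \<Rightarrow> 'a) \<Rightarrow> 'a set \<Rightarrow> bool" where
  "sa_projection_onto Q V \<longleftrightarrow>
     bounded_linear Q \<and> Q \<circ> Q = Q \<and> (\<forall>x y. inner (Q x) y = inner x (Q y)) \<and> range Q = V"

end

theory Submission
  imports Defs
begin

lemma foldr_comp_id: "foldr (\<circ>) xs z = foldr (\<circ>) xs id \<circ> (z::'b\<Rightarrow>'b)"
  by (induction xs) (auto simp: comp_assoc)

definition sg :: "nat \<Rightarrow> nat \<Rightarrow> nat \<Rightarrow> nat \<Rightarrow> nat" where
  "sg n m j = foldr (\<circ>) (map (\<lambda>i. Transposition.transpose (n + i) (n + m + i)) [1..<j+1]) id"

lemma sg_0: "sg n m 0 = id" by (simp add: sg_def)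

lemma sg_Suc: "sg n m (Suc j) = sg n m j \<circ> Transposition.transpose (n + (j+1)) (n + m + (j+1))"
proof -
  have "[1..<Suc j + 1] = [1..<j+1] @ [j+1]" by simp
  then show ?thesis unfolding sg_def
    apply (simp only: map_append foldr_append list.map foldr.simps)
    apply (subst foldr_comp_id) apply simp done
qed

lemma sigma_partial:
  "j \<le> m \<Longrightarrow> sg n m j x =
    (if n < x \<and> x \<le> n + j then x + m else if n + m < x \<and> x \<le> n + m + j then x - m else x)"
proof (induction j arbitrary: x)
  case 0 then show ?case by (simp add: sg_0)
next
  case (Suc j)
  have "sg n m (Suc j) x = sg n m j (Transposition.transpose (n + (j+1)) (n + m + (j+1)) x)"
    by (simp add: sg_Suc)
  also have "\<dots> = (if n < x \<and> x \<le> n + Suc j then x + m else if n + m < x \<and> x \<le> n + m + Suc j then x - m else x)"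
    using Suc by (auto simp: Transposition.transpose_def)
  finally show ?case .
qed

lemma sigma_apply: "sigma n m x = (if n < x \<and> x \<le> n + m then x + m else if n + m < x \<and> x \<le> n + m + m then x - m else x)"
  using sigma_partial[of m m n x] unfolding sg_def sigma_def by simp

lemma sigma_invol: "sigma n m \<circ> sigma n m = id"
  by (rule ext) (auto simp: sigma_apply split: if_splits)

lemma sigma_inv: "inv (sigma n m) = sigma n m"
  by (rule inv_unique_comp) (simp_all add: sigma_invol)

definition Stab :: "nat set \<Rightarrow> (nat \<Rightarrow> nat) set" where
  "Stab F = {s \<in> Sinf. \<forall>j\<in>F. s j = j}"

definition Hinv :: "((nat \<Rightarrow> nat) \<Rightarrow> 'a \<Rightarrow> 'a) \<Rightarrow> nat set \<Rightarrow> 'a set" where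
  "Hinv K F = {w. \<forall>s\<in>Stab F. K s w = w}"

lemma sigma_Stab: "sigma n m \<in> Stab {0..n}"
proof -
  have "bij (sigma n m)" using o_bij[OF sigma_invol sigma_invol] .
  then show ?thesis by (auto simp: Stab_def Sinf_def sigma_apply)
qed

lemma Sfix_Stab: "Sfix n = Stab {0..n}"
  unfolding Sfix_def Stab_def Sinf_def
  by (auto, metis atLeastAtMost_iff le0 not_gr0 Suc_leI One_nat_def)

lemma Stab_anti: "s \<in> Stab G \<Longrightarrow> F \<subseteq> G \<Longrightarrow> s \<in> Stab F"
  by (auto simp: Stab_def)

lemma transp_Stab: "a \<notin> F \<Longrightarrow> b \<notin> F \<Longrightarrow> 0 \<in> F \<Longrightarrow> Transposition.transpose a b \<in> Stab F"
  unfolding Stab_def Sinf_def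
  by (auto simp: Transposition.transpose_def) (metis neq0_conv)

lemma Stab_Sinf: "s \<in> Stab F \<Longrightarrow> s \<in> Sinf" by (simp add: Stab_def)

lemma Sinf_comp: "s \<in> Sinf \<Longrightarrow> t \<in> Sinf \<Longrightarrow> s \<circ> t \<in> Sinf"
  by (auto simp: Sinf_def bij_comp)

lemma Stab_comp: "s \<in> Stab F \<Longrightarrow> t \<in> Stab F \<Longrightarrow> s \<circ> t \<in> Stab F"
  by (auto simp: Stab_def Sinf_comp)

lemma Stab_inv: "s \<in> Stab F \<Longrightarrow> inv s \<in> Stab F"
  unfolding Stab_def Sinf_def
  by (auto simp: bij_imp_bij_inv bij_is_inj inv_f_eq)

lemma K_comp: "unitary_rep K \<Longrightarrow> s \<in> Sinf \<Longrightarrow> t \<in> Sinf \<Longrightarrow> K (s \<circ> t) x = K s (K t x)"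
  by (simp add: unitary_rep_def)

lemma K_id: "unitary_rep K \<Longrightarrow> K id x = x"
  by (simp add: unitary_rep_def)

lemma K_bl: "unitary_rep K \<Longrightarrow> s \<in> Sinf \<Longrightarrow> bounded_linear (K s)"
  by (simp add: unitary_rep_def)

lemma K_norm: "unitary_rep K \<Longrightarrow> s \<in> Sinf \<Longrightarrow> norm (K s x) = norm x"
  by (simp add: unitary_rep_def)

lemma K_diff: "unitary_rep K \<Longrightarrow> s \<in> Sinf \<Longrightarrow> K s (a - b) = K s a - K s b"
  using K_bl linear_diff bounded_linear.linear by blast

lemma K_add: "unitary_rep K \<Longrightarrow> s \<in> Sinf \<Longrightarrow> K s (a + b) = K s a + K s b"
  using K_bl linear_add bounded_linear.linear by blast

lemma K_scale: "unitary_rep K \<Longrightarrow> s \<in> Sinf \<Longrightarrow> K s (r *\<^sub>R a) = r *\<^sub>R K s a"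
  using K_bl linear_scale bounded_linear.linear by blast

lemma K_inner: "unitary_rep K \<Longrightarrow> s \<in> Sinf \<Longrightarrow> inner (K s a) (K s b) = inner a b"
  by (simp add: dot_norm[of "K s a"] dot_norm[of a] K_add[symmetric] K_norm)

lemma K_adj: assumes "unitary_rep K" "s \<in> Sinf" "s \<circ> s = id"
  shows "inner (K s a) b = inner a (K s b)"
proof -
  have "K s (K s b) = b" using K_comp[OF assms(1,2,2), of b] assms(3) K_id[OF assms(1)] by simp
  then have "inner (K s a) b = inner (K s a) (K s (K s b))" by simp
  also have "\<dots> = inner a (K s b)" using K_inner[OF assms(1,2)] by simp
  finally show ?thesis .
qed

lemma inner_ext: "(\<And>\<xi>. inner a \<xi> = inner b (\<xi>::'a::real_inner)) \<Longrightarrow> a = b"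
  by (metis inner_diff_left inner_eq_zero_iff right_minus_eq)


section \<open>Weak limits\<close>

lemma weak_props:
  fixes K :: "(nat \<Rightarrow> nat) \<Rightarrow> 'a::{real_inner,complete_space} \<Rightarrow> 'a"
  assumes U: "unitary_rep K" and W: "weak_op_limit (\<lambda>m. K (s m)) B"
    and ev: "eventually (\<lambda>m. s m \<in> Sinf \<and> s m \<circ> s m = id) sequentially"
  shows "bounded_linear B" and "\<And>x y. inner (B x) y = inner x (B y)"
proof -
  have lim: "(\<lambda>m. inner (K (s m) x) \<xi>) \<longlonglongrightarrow> inner (B x) \<xi>" for x \<xi>
    using W by (simp add: weak_op_limit_def)
  have add: "B (x + y) = B x + B y" for x y
  proof (rule inner_ext)
    fix \<xi>
    have "(\<lambda>m. inner (K (s m) x) \<xi> + inner (K (s m) y) \<xi>) \<longlonglongrightarrow> inner (B x) \<xi> + inner (B y) \<xi>"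
      by (intro tendsto_add lim)
    moreover have "eventually (\<lambda>m. inner (K (s m) x) \<xi> + inner (K (s m) y) \<xi> = inner (K (s m) (x + y)) \<xi>) sequentially"
      using ev by eventually_elim (simp add: K_add[OF U] inner_add_left)
    ultimately have "(\<lambda>m. inner (K (s m) (x + y)) \<xi>) \<longlonglongrightarrow> inner (B x) \<xi> + inner (B y) \<xi>"
      by (rule Lim_transform_eventually)
    with lim[of "x+y" \<xi>] show "inner (B (x + y)) \<xi> = inner (B x + B y) \<xi>"
      by (simp add: inner_add_left LIMSEQ_unique)
  qed
  have scale: "B (r *\<^sub>R x) = r *\<^sub>R B x" for r x
  proof (rule inner_ext)
    fix \<xi>
    have "(\<lambda>m. r * inner (K (s m) x) \<xi>) \<longlonglongrightarrow> r * inner (B x) \<xi>"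
      by (intro tendsto_mult tendsto_const lim)
    moreover have "eventually (\<lambda>m. r * inner (K (s m) x) \<xi> = inner (K (s m) (r *\<^sub>R x)) \<xi>) sequentially"
      using ev by eventually_elim (simp add: K_scale[OF U])
    ultimately have "(\<lambda>m. inner (K (s m) (r *\<^sub>R x)) \<xi>) \<longlonglongrightarrow> r * inner (B x) \<xi>"
      by (rule Lim_transform_eventually)
    with lim[of "r *\<^sub>R x" \<xi>] show "inner (B (r *\<^sub>R x)) \<xi> = inner (r *\<^sub>R B x) \<xi>"
      by (simp add: LIMSEQ_unique)
  qed
  have bnd: "norm (B x) \<le> norm x * 1" for x
  proof -
    have "(\<lambda>m. \<bar>inner (K (s m) x) (B x)\<bar>) \<longlonglongrightarrow> \<bar>inner (B x) (B x)\<bar>"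
      by (intro tendsto_rabs lim)
    moreover have "eventually (\<lambda>m. \<bar>inner (K (s m) x) (B x)\<bar> \<le> norm x * norm (B x)) sequentially"
      using ev proof eventually_elim
      case (elim m)
      have "\<bar>inner (K (s m) x) (B x)\<bar> \<le> norm (K (s m) x) * norm (B x)" by (rule Cauchy_Schwarz_ineq2)
      then show ?case using K_norm[OF U] elim by simp
    qed
    ultimately have "\<bar>inner (B x) (B x)\<bar> \<le> norm x * norm (B x)"
      using tendsto_upperbound by (metis sequentially_bot)
    then have "norm (B x) * norm (B x) \<le> norm x * norm (B x)"
      by (simp add: power2_eq_square[symmetric] power2_norm_eq_inner)
    then show ?thesis
      by (cases "norm (B x) = 0") (auto simp: mult_le_cancel_right)
  qed
  show "bounded_linear B"
    by (rule bounded_linear_intro[OF add scale bnd])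
  fix x y
  have "eventually (\<lambda>m. inner (K (s m) y) x = inner (K (s m) x) y) sequentially"
    using ev by eventually_elim (metis K_adj[OF U] inner_commute)
  then have "(\<lambda>m. inner (K (s m) x) y) \<longlonglongrightarrow> inner (B y) x"
    using lim[of y x] by (rule Lim_transform_eventually[rotated])
  with lim[of x y] have "inner (B x) y = inner (B y) x" by (rule LIMSEQ_unique)
  then show "inner (B x) y = inner x (B y)" by (simp add: inner_commute)
qed

lemma weak_fix:
  assumes W: "weak_op_limit (\<lambda>m. K (s m)) B"
    and ev: "eventually (\<lambda>m. K (s m) h = h) sequentially"
  shows "B h = h"
proof (rule inner_ext)
  fix \<xi>
  have "(\<lambda>m. inner (K (s m) h) \<xi>) \<longlonglongrightarrow> inner (B h) \<xi>"
    using W by (simp add: weak_op_limit_def)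
  moreover have "eventually (\<lambda>m. inner h \<xi> = inner (K (s m) h) \<xi>) sequentially"
    using ev by eventually_elim simp
  then have "(\<lambda>m. inner (K (s m) h) \<xi>) \<longlonglongrightarrow> inner h \<xi>"
    by (rule Lim_transform_eventually[OF tendsto_const])
  ultimately show "inner (B h) \<xi> = inner h \<xi>" by (rule LIMSEQ_unique)
qed

lemma weak_inv:
  fixes K :: "(nat \<Rightarrow> nat) \<Rightarrow> 'a::{real_inner,complete_space} \<Rightarrow> 'a"
  assumes U: "unitary_rep K" and W: "weak_op_limit (\<lambda>m. K (s m)) B"
    and t: "t \<in> Sinf" "t \<circ> t = id"
    and ev: "eventually (\<lambda>m. s m \<in> Sinf \<and> u m \<in> Sinf \<and> t \<circ> s m = s m \<circ> u m) sequentially"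
    and lim0: "(\<lambda>m. norm (K (u m) x - x)) \<longlonglongrightarrow> 0"
  shows "K t (B x) = B x"
proof (rule inner_ext)
  fix \<xi>
  have la: "(\<lambda>m. inner (K (s m) x) (K t \<xi>)) \<longlonglongrightarrow> inner (B x) (K t \<xi>)"
    and lb: "(\<lambda>m. inner (K (s m) x) \<xi>) \<longlonglongrightarrow> inner (B x) \<xi>"
    using W by (simp_all add: weak_op_limit_def)
  have "eventually (\<lambda>m. norm (inner (K (s m) x) (K t \<xi>) - inner (K (s m) x) \<xi>) \<le> norm (K (u m) x - x) * norm \<xi>) sequentially"
    using ev proof eventually_elim
    case (elim m)
    have "inner (K (s m) x) (K t \<xi>) = inner (K t (K (s m) x)) \<xi>"
      using K_adj[OF U t] by simp
    also have "K t (K (s m) x) = K (s m) (K (u m) x)"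
      using K_comp[OF U, of t "s m"] K_comp[OF U, of "s m" "u m"] elim t by metis
    finally have "inner (K (s m) x) (K t \<xi>) - inner (K (s m) x) \<xi> = inner (K (s m) (K (u m) x - x)) \<xi>"
      using elim by (simp add: K_diff[OF U] inner_diff_left)
    also have "norm \<dots> \<le> norm (K (s m) (K (u m) x - x)) * norm \<xi>"
      using Cauchy_Schwarz_ineq2 by simp
    finally show ?case using K_norm[OF U] elim by simp
  qed
  moreover have "(\<lambda>m. norm (K (u m) x - x) * norm \<xi>) \<longlonglongrightarrow> 0"
    using tendsto_mult_left_zero[OF lim0] by simp
  ultimately have "(\<lambda>m. inner (K (s m) x) (K t \<xi>) - inner (K (s m) x) \<xi>) \<longlonglongrightarrow> 0"
    by (rule Lim_null_comparison)
  moreover have "(\<lambda>m. inner (K (s m) x) (K t \<xi>) - inner (K (s m) x) \<xi>) \<longlonglongrightarrow> inner (B x) (K t \<xi>) - inner (B x) \<xi>"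
    by (intro tendsto_diff la lb)
  ultimately have "inner (B x) (K t \<xi>) - inner (B x) \<xi> = 0" using LIMSEQ_unique by blast
  then show "inner (K t (B x)) \<xi> = inner (B x) \<xi>"
    using K_adj[OF U t] by simp
qed


section \<open>Continuity\<close>

lemma Sfix_mono: "u \<in> Sfix M' \<Longrightarrow> M \<le> M' \<Longrightarrow> u \<in> Sfix M"
  by (auto simp: Sfix_def)

lemma sup_bound:
  fixes K :: "(nat \<Rightarrow> nat) \<Rightarrow> 'a::{real_inner,complete_space} \<Rightarrow> 'a"
  assumes U: "unitary_rep K" and u: "u \<in> Sfix M"
  shows "norm (K u w - w) \<le> (SUP s\<in>Sfix M. norm (K s w - w))"
proof (rule cSUP_upper[OF u])
  have "norm (K s w - w) \<le> 2 * norm w" if "s \<in> Sfix M" for s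
  proof -
    have "s \<in> Sinf" using that by (simp add: Sfix_def)
    then have "norm (K s w - w) \<le> norm (K s w) + norm w" by (simp add: norm_triangle_ineq4)
    also have "\<dots> = 2 * norm w" using K_norm[OF U \<open>s \<in> Sinf\<close>] by simp
    finally show ?thesis .
  qed
  then show "bdd_above ((\<lambda>s. norm (K s w - w)) ` Sfix M)"
    by (intro bdd_aboveI[of _ "2 * norm w"]) auto
qed

lemma cont_seq:
  fixes K :: "(nat \<Rightarrow> nat) \<Rightarrow> 'a::{real_inner,complete_space} \<Rightarrow> 'a"
  assumes U: "unitary_rep K" and C: "continuous_rep K"
    and ev: "eventually (\<lambda>m. u m \<in> Sfix m) sequentially"
  shows "(\<lambda>m. norm (K (u m) x - x)) \<longlonglongrightarrow> 0"
proof -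
  have "eventually (\<lambda>m. norm (norm (K (u m) x - x)) \<le> (SUP s\<in>Sfix m. norm (K s x - x))) sequentially"
    using ev by eventually_elim (simp add: sup_bound[OF U])
  moreover have "(\<lambda>m. SUP s\<in>Sfix m. norm (K s x - x)) \<longlonglongrightarrow> 0"
    using C by (simp add: continuous_rep_def)
  ultimately show ?thesis by (rule Lim_null_comparison)
qed

lemma approx_perm:
  fixes K :: "(nat \<Rightarrow> nat) \<Rightarrow> 'a::{real_inner,complete_space} \<Rightarrow> 'a"
  assumes U: "unitary_rep K" and F0: "0 \<in> F"
    and T: "\<And>i j. i \<notin> F \<Longrightarrow> j \<notin> F \<Longrightarrow> K (Transposition.transpose i j) w = w"
    and s: "s \<in> Stab F"
  shows "\<exists>f. f \<in> Stab F \<and> K f w = w \<and> (\<forall>j\<le>M. f j = s j)"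
proof (induction M)
  case 0
  have "s 0 = 0" using s by (simp add: Stab_def Sinf_def)
  have "id \<in> Stab F" by (simp add: Stab_def Sinf_def)
  show ?case
  proof (rule exI[of _ id], intro conjI)
    show "id \<in> Stab F" by fact
    show "K id w = w" by (rule K_id[OF U])
    show "\<forall>j\<le>0. id j = s j" using \<open>s 0 = 0\<close> by simp
  qed
next
  case (Suc M)
  then obtain f where f: "f \<in> Stab F" "K f w = w" "\<forall>j\<le>M. f j = s j" by blast
  define a where "a = f (Suc M)"
  define b where "b = s (Suc M)"
  define t where "t = Transposition.transpose a b"
  have injf: "inj f" and injs: "inj s" using f(1) s by (auto simp: Stab_def Sinf_def bij_is_inj)
  have fF: "\<And>j. j \<in> F \<Longrightarrow> f j = j" and sF: "\<And>j. j \<in> F \<Longrightarrow> s j = j" using f(1) s by (auto simp: Stab_def)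
  have tw: "t \<in> Stab F \<and> K t w = w"
  proof (cases "a = b")
    case True
    then show ?thesis using K_id[OF U] by (simp add: t_def Stab_def Sinf_def)
  next
    case False
    have "a \<notin> F"
    proof
      assume "a \<in> F"
      then have "f a = f (Suc M)" using fF a_def by simp
      then have "a = Suc M" using injf by (simp add: inj_eq)
      then show False using \<open>a \<in> F\<close> sF b_def False by simp
    qed
    moreover have "b \<notin> F"
    proof
      assume "b \<in> F"
      then have "s b = s (Suc M)" using sF b_def by simp
      then have "b = Suc M" using injs by (simp add: inj_eq)
      then show False using \<open>b \<in> F\<close> fF a_def False by simp
    qed
    ultimately show ?thesis using T transp_Stab[OF _ _ F0] t_def by simp
  qed
  show ?case
  proof (intro exI[of _ "t \<circ> f"] conjI allI impI)
    show "t \<circ> f \<in> Stab F" using tw f(1) Stab_comp by blast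
    show "K (t \<circ> f) w = w" using K_comp[OF U] tw f Stab_Sinf by metis
    fix j assume "j \<le> Suc M"
    show "(t \<circ> f) j = s j"
    proof (cases "j = Suc M")
      case True then show ?thesis by (simp add: t_def a_def b_def)
    next
      case False
      then have "j \<le> M" using \<open>j \<le> Suc M\<close> by simp
      then have "f j = s j" using f(3) by simp
      moreover have "s j \<noteq> b" using injs False by (simp add: b_def inj_eq)
      moreover have "f j \<noteq> a" using injf False by (simp add: a_def inj_eq)
      ultimately show ?thesis by (simp add: t_def)
    qed
  qed
qed

lemma closure_inv:
  fixes K :: "(nat \<Rightarrow> nat) \<Rightarrow> 'a::{real_inner,complete_space} \<Rightarrow> 'a"
  assumes U: "unitary_rep K" and C: "continuous_rep K" and F0: "0 \<in> F"
    and T: "\<And>i j. i \<notin> F \<Longrightarrow> j \<notin> F \<Longrightarrow> K (Transposition.transpose i j) w = w"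
  shows "w \<in> Hinv K F"
  unfolding Hinv_def
proof (intro CollectI ballI)
  fix s assume s: "s \<in> Stab F"
  have small: "norm (K s w - w) < e" if e: "e > 0" for e
  proof -
    have "(\<lambda>M. SUP u\<in>Sfix M. norm (K u w - w)) \<longlonglongrightarrow> 0"
      using C by (simp add: continuous_rep_def)
    from LIMSEQ_D[OF this e] obtain N where N: "\<forall>M\<ge>N. norm ((SUP u\<in>Sfix M. norm (K u w - w)) - 0) < e"
      by blast
    define M where "M = N"
    have M: "\<bar>(SUP u\<in>Sfix M. norm (K u w - w))\<bar> < e" using N by (simp add: M_def)
    obtain f where f: "f \<in> Stab F" "K f w = w" "\<forall>j\<le>M. f j = s j"
      using approx_perm[OF U F0 T s] by blast
    have fS: "f \<in> Sinf" and sS: "s \<in> Sinf" using f s Stab_Sinf by auto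
    have bf: "bij f" using fS by (simp add: Sinf_def)
    define u where "u = inv f \<circ> s"
    have uS: "u \<in> Sinf" using Stab_comp[OF Stab_inv[OF f(1)] s] Stab_Sinf u_def by simp
    have "u j = j" if "j \<le> M" for j
    proof -
      have "u j = inv f (f j)" using f(3) that by (simp add: u_def)
      also have "\<dots> = j" using bf by (simp add: bij_is_inj inv_f_f)
      finally show ?thesis .
    qed
    then have uM: "u \<in> Sfix M" using uS by (simp add: Sfix_def)
    have "s = f \<circ> u" by (rule ext) (simp add: u_def bij_is_surj surj_f_inv_f bf)
    then have "K s w - w = K f (K u w - w)"
      using K_comp[OF U fS uS] K_diff[OF U fS] f(2) by simp
    then have "norm (K s w - w) = norm (K u w - w)" using K_norm[OF U fS] by simp
    also have "\<dots> \<le> (SUP u\<in>Sfix M. norm (K u w - w))" by (rule sup_bound[OF U uM])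
    also have "\<dots> < e" using M by simp
    finally show ?thesis .
  qed
  have "norm (K s w - w) = 0"
  proof (rule ccontr)
    assume "norm (K s w - w) \<noteq> 0"
    then have "norm (K s w - w) > 0" by simp
    from small[OF this] show False by simp
  qed
  then show "K s w = w" by simp
qed


section \<open>Projections\<close>

lemma proj_intro:
  assumes "bounded_linear Q" "\<And>x y. inner (Q x) y = inner x (Q y)"
    "\<And>v. v \<in> V \<Longrightarrow> Q v = v" "\<And>x. Q x \<in> V"
  shows "sa_projection_onto Q V"
  unfolding sa_projection_onto_def
proof (intro conjI allI)
  show "Q \<circ> Q = Q" using assms by (auto simp: fun_eq_iff)
  show "range Q = V" using assms by (auto intro: range_eqI[of _ Q, OF assms(3)[symmetric]])
qed (use assms in auto)

lemma proj_unique: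
  assumes A: "sa_projection_onto Q V" and B: "sa_projection_onto Q' V"
  shows "Q = Q'"
proof
  fix x
  have QQ: "Q (Q y) = Q y" and QQ': "Q' (Q' y) = Q' y" for y
    using A B by (auto simp: sa_projection_onto_def fun_eq_iff)
  have rQ: "range Q = V" and rQ': "range Q' = V" using A B by (auto simp: sa_projection_onto_def)
  have a1: "Q (Q' x) = Q' x"
  proof -
    have "Q' x \<in> range Q" using rQ rQ' by auto
    then obtain y where "Q' x = Q y" by auto
    then show ?thesis using QQ by simp
  qed
  have a2: "Q' (Q x) = Q x"
  proof -
    have "Q x \<in> range Q'" using rQ rQ' by auto
    then obtain y where "Q x = Q' y" by auto
    then show ?thesis using QQ' by simp
  qed
  have lQ: "linear Q" and lQ': "linear Q'" using A B
    by (auto simp: sa_projection_onto_def bounded_linear.linear)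
  define d where "d = Q x - Q' x"
  have Qd: "Q d = d" using a1 QQ linear_diff[OF lQ] by (simp add: d_def)
  have Q'd: "Q' d = d" using a2 QQ' linear_diff[OF lQ'] by (simp add: d_def)
  have sa: "inner (Q y) z = inner y (Q z)" "inner (Q' y) z = inner y (Q' z)" for y z
    using A B by (auto simp: sa_projection_onto_def)
  have "inner d d = inner (Q x) d - inner (Q' x) d" by (simp add: d_def inner_diff_left)
  also have "\<dots> = inner x (Q d) - inner x (Q' d)" using sa by simp
  also have "\<dots> = 0" using Qd Q'd by simp
  finally have "d = 0" by simp
  then show "Q x = Q' x" by (simp add: d_def)
qed

lemma P_proj:
  fixes K :: "(nat \<Rightarrow> nat) \<Rightarrow> 'a::{real_inner,complete_space} \<Rightarrow> 'a"
  assumes U: "unitary_rep K" and C: "continuous_rep K"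
    and W: "weak_op_limit (\<lambda>m. K (sigma n m)) P"
  shows "sa_projection_onto P (Hinv K {0..n})"
proof -
  have ev: "eventually (\<lambda>m. sigma n m \<in> Sinf \<and> sigma n m \<circ> sigma n m = id) sequentially"
    using sigma_Stab[THEN Stab_Sinf] sigma_invol by simp
  note wp = weak_props[OF U W ev]
  show ?thesis
  proof (rule proj_intro[OF wp])
    fix v assume "v \<in> Hinv K {0..n}"
    then show "P v = v"
      using sigma_Stab by (intro weak_fix[OF W]) (auto simp: Hinv_def)
  next
    fix x
    show "P x \<in> Hinv K {0..n}"
    proof (rule closure_inv[OF U C])
      fix i j :: nat assume i: "i \<notin> {0..n}" and j: "j \<notin> {0..n}"
      define t where "t = Transposition.transpose i j"
      have tS: "t \<in> Sinf" using transp_Stab[OF i j] Stab_Sinf by (auto simp: t_def)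
      have tt: "t \<circ> t = id" by (simp add: t_def)
      define u where "u m = Transposition.transpose (i + m) (j + m)" for m
      have "eventually (\<lambda>m. m \<ge> max i j) sequentially" by (rule eventually_ge_at_top)
      then have ev2: "eventually (\<lambda>m. sigma n m \<in> Sinf \<and> u m \<in> Sinf \<and> t \<circ> sigma n m = sigma n m \<circ> u m) sequentially"
      proof eventually_elim
        case (elim m)
        have bs: "bij (sigma n m)" using o_bij[OF sigma_invol sigma_invol] .
        have "t \<circ> sigma n m = sigma n m \<circ> Transposition.transpose (inv (sigma n m) i) (inv (sigma n m) j)"
          unfolding t_def by (rule transpose_comp_eq[OF bs])
        also have "inv (sigma n m) i = i + m" using i elim by (simp add: sigma_inv sigma_apply)
        also have "inv (sigma n m) j = j + m" using j elim by (simp add: sigma_inv sigma_apply)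
        finally have "t \<circ> sigma n m = sigma n m \<circ> u m" unfolding u_def .
        moreover have "u m \<in> Sinf" using i j transp_Stab[of "i+m" "{0}" "j+m"] Stab_Sinf by (auto simp: u_def)
        ultimately show ?case using sigma_Stab Stab_Sinf by auto
      qed
      have "eventually (\<lambda>m. u m \<in> Sfix m) sequentially"
        using i j transp_Stab[of "i+m" "{0..m}" "j+m" for m] by (auto simp: u_def Sfix_Stab)
      then have "(\<lambda>m. norm (K (u m) x - x)) \<longlonglongrightarrow> 0" by (rule cont_seq[OF U C])
      from weak_inv[OF U W tS tt ev2 this]
      show "K (Transposition.transpose i j) (P x) = P x" by (simp add: t_def)
    qed simp
  qed
qed


lemma Sfix2_sub: assumes k: "k \<ge> 1" shows "Sfix2 k n \<subseteq> Stab ({0..n} - {k})"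
proof
  fix s assume "s \<in> Sfix2 k n"
  then show "s \<in> Stab ({0..n} - {k})"
    unfolding Sfix2_def
  proof (induction rule: gen_subgroup.induct)
    case gen_id
    have "bij (\<lambda>x::nat. x)" using bij_id by (simp add: id_def)
    then show ?case by (simp add: Stab_def Sinf_def)
  next
    case (gen_base s)
    then show ?case
    proof
      assume "s = Transposition.transpose k (n + 1)"
      then show ?thesis using k by (simp add: transp_Stab)
    next
      assume "s \<in> Sfix n"
      then show ?thesis by (auto simp: Sfix_Stab intro: Stab_anti)
    qed
  next
    case (gen_comp s t) then show ?case using Stab_comp by blast
  next
    case (gen_inv s) then show ?case using Stab_inv by blast
  qed
qed

lemma Sfix2_sup: assumes k: "k \<ge> 1" shows "Stab ({0..n} - {k}) \<subseteq> Sfix2 k n"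
proof
  fix s assume s: "s \<in> Stab ({0..n} - {k})"
  have sF: "\<And>x. x \<in> {0..n} - {k} \<Longrightarrow> s x = x" and sS: "s \<in> Sinf" using s by (auto simp: Stab_def)
  have injs: "inj s" using sS by (simp add: Sinf_def bij_is_inj)
  show "s \<in> Sfix2 k n"
  proof (cases "k > n \<or> s k = k")
    case True
    have "s x = x" if "x \<in> {0..n}" for x using True sF that by (cases "x = k") auto
    then have "s \<in> Stab {0..n}" using sS by (auto simp: Stab_def)
    then show ?thesis unfolding Sfix2_def by (intro gen_base) (simp add: Sfix_Stab)
  next
    case False
    define j where "j = s k"
    have kn: "k \<le> n" and jk: "j \<noteq> k" using False by (auto simp: j_def)
    have jn: "j > n"
    proof (rule ccontr)
      assume "\<not> n < j"
      then have "j \<in> {0..n} - {k}" using jk by simp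
      then have "s j = s k" using sF j_def by simp
      then show False using injs jk by (simp add: inj_eq)
    qed
    define c where "c = Transposition.transpose k j"
    have cG: "c \<in> Sfix2 k n"
    proof (cases "j = n + 1")
      case True
      then show ?thesis unfolding Sfix2_def c_def by (intro gen_base) simp
    next
      case False
      have "c = Transposition.transpose (n+1) j \<circ> Transposition.transpose k (n + 1) \<circ> Transposition.transpose (n+1) j"
        using False jn kn jk by (auto simp: c_def fun_eq_iff Transposition.transpose_def)
      moreover have "Transposition.transpose (n+1) j \<in> Sfix n"
        using jn by (auto simp: Sfix_Stab intro: transp_Stab)
      ultimately show ?thesis unfolding Sfix2_def
        by (metis gen_subgroup.gen_base gen_subgroup.gen_comp insertI1 insertI2)
    qed
    define r where "r = c \<circ> s"
    have cS: "c \<in> Stab ({0..n} - {k})" using jn k by (auto simp: c_def intro: transp_Stab)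
    have "r \<in> Stab ({0..n} - {k})" using Stab_comp[OF cS s] by (simp add: r_def)
    moreover have "r k = k" by (simp add: r_def c_def j_def)
    ultimately have "r \<in> Stab {0..n}" by (auto simp: Stab_def)
    then have rG: "r \<in> Sfix2 k n" unfolding Sfix2_def by (intro gen_base) (simp add: Sfix_Stab)
    have "s = c \<circ> r" by (simp add: r_def c_def comp_assoc[symmetric])
    then show ?thesis using cG rG unfolding Sfix2_def by (metis gen_subgroup.gen_comp)
  qed
qed

theorem lemma6:
  fixes K :: "(nat \<Rightarrow> nat) \<Rightarrow> 'a::{real_inner,complete_space} \<Rightarrow> 'a"
    and n k :: nat and P P' Ok :: "'a \<Rightarrow> 'a"
  assumes "unitary_rep K" and "continuous_rep K"
    and "n \<ge> 1" and "k \<ge> 1"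
    and "weak_op_limit (\<lambda>m. K (sigma n m)) P"
    and "weak_op_limit (\<lambda>N. K (Transposition.transpose k N)) Ok"
    and "weak_op_limit (\<lambda>m. K (sigma (n - 1) m)) P'"
  shows "sa_projection_onto (Ok \<circ> P) {\<eta>. \<forall>s\<in>Sfix2 k n. K s \<eta> = \<eta>}
         \<and> (k = n \<longrightarrow> Ok \<circ> P = P')"
proof -
  note U = assms(1) and C = assms(2) and n1 = assms(3) and k1 = assms(4)
    and WP = assms(5) and WO = assms(6) and WP' = assms(7)
  define F where "F = {0..n} - {k}"
  have F0: "0 \<in> F" using k1 by (simp add: F_def)
  have FS: "F \<subseteq> {0..n}" by (auto simp: F_def)
  have tgt: "{\<eta>. \<forall>s\<in>Sfix2 k n. K s \<eta> = \<eta>} = Hinv K F"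
    using Sfix2_sub[OF k1, of n] Sfix2_sup[OF k1, of n] by (auto simp: Hinv_def F_def)
  have PP: "sa_projection_onto P (Hinv K {0..n})" by (rule P_proj[OF U C WP])
  have PPP: "P (P y) = P y" for y
    using PP by (auto simp: sa_projection_onto_def fun_eq_iff)
  have Pfix: "P v = v" if "v \<in> Hinv K {0..n}" for v
  proof -
    have "v \<in> range P" using PP that by (simp add: sa_projection_onto_def)
    then obtain y where "v = P y" by auto
    then show ?thesis using PPP by simp
  qed
  have Prange: "P x \<in> Hinv K {0..n}" for x
    using PP by (auto simp: sa_projection_onto_def)
  have Psa: "inner (P x) y = inner x (P y)" for x y
    using PP by (auto simp: sa_projection_onto_def)
  have Pbl: "bounded_linear P" using PP by (auto simp: sa_projection_onto_def)
  have evO: "eventually (\<lambda>N. Transposition.transpose k N \<in> Sinf \<and> Transposition.transpose k N \<circ> Transposition.transpose k N = id) sequentially"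
    using eventually_ge_at_top[of 1]
  proof eventually_elim
    case (elim N)
    have "Transposition.transpose k N \<in> Stab {0}" using k1 elim by (intro transp_Stab) auto
    then show ?case using Stab_Sinf by simp
  qed
  note wo = weak_props[OF U WO evO]
  have HF: "Hinv K F \<subseteq> Hinv K {0..n}"
    using Stab_anti[OF _ FS] by (auto simp: Hinv_def)
  have Ofix: "Ok v = v" if v: "v \<in> Hinv K F" for v
  proof (rule weak_fix[OF WO])
    show "eventually (\<lambda>N. K (Transposition.transpose k N) v = v) sequentially"
      using eventually_gt_at_top[of n]
    proof eventually_elim
      case (elim N)
      have "Transposition.transpose k N \<in> Stab F"
        using elim F0 by (intro transp_Stab) (auto simp: F_def)
      then show ?case using v by (simp add: Hinv_def)
    qed
  qed
  have Orange: "Ok h \<in> Hinv K F" if h: "h \<in> Hinv K {0..n}" for h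
  proof (rule closure_inv[OF U C F0])
    fix i j assume i: "i \<notin> F" and j: "j \<notin> F"
    define t where "t = Transposition.transpose i j"
    have tS: "t \<in> Sinf" using transp_Stab[OF i j F0] Stab_Sinf by (auto simp: t_def)
    have tt: "t \<circ> t = id" by (simp add: t_def)
    define u where "u N = Transposition.transpose (Transposition.transpose k N i) (Transposition.transpose k N j)" for N
    have uStab: "u N \<in> Stab {0..n}" if "N > n" "N \<noteq> i" "N \<noteq> j" for N
    proof -
      have "Transposition.transpose k N i \<notin> {0..n}" "Transposition.transpose k N j \<notin> {0..n}"
        using that i j by (auto simp: F_def Transposition.transpose_def)
      then show ?thesis unfolding u_def by (intro transp_Stab) auto
    qed
    have "eventually (\<lambda>N. N > max n (max i j)) sequentially" by (rule eventually_gt_at_top)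
    then have ev2: "eventually (\<lambda>N. Transposition.transpose k N \<in> Sinf \<and> u N \<in> Sinf \<and> t \<circ> Transposition.transpose k N = Transposition.transpose k N \<circ> u N) sequentially"
    proof eventually_elim
      case (elim N)
      have "t \<circ> Transposition.transpose k N = Transposition.transpose k N \<circ> u N"
        unfolding t_def u_def using transpose_comp_eq[OF bij_transpose, of i j k N] by simp
      moreover have "u N \<in> Sinf" using uStab[of N] elim Stab_Sinf by auto
      moreover have "Transposition.transpose k N \<in> Sinf"
        using transp_Stab[of k "{0}" N] k1 elim Stab_Sinf by auto
      ultimately show ?case by simp
    qed
    have "eventually (\<lambda>N. 0 = norm (K (u N) h - h)) sequentially"
      using eventually_gt_at_top[of "max n (max i j)"]
      by eventually_elim (use h uStab in \<open>auto simp: Hinv_def\<close>)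
    then have "(\<lambda>N. norm (K (u N) h - h)) \<longlonglongrightarrow> 0"
      by (rule Lim_transform_eventually[OF tendsto_const])
    from weak_inv[OF U WO tS tt ev2 this]
    show "K (Transposition.transpose i j) (Ok h) = Ok h" by (simp add: t_def)
  qed
  have Qfix: "(Ok \<circ> P) v = v" if "v \<in> Hinv K F" for v
    using that HF Pfix Ofix by auto
  have Qrange: "(Ok \<circ> P) x \<in> Hinv K F" for x
    using Orange Prange by simp
  have key: "inner hh y = inner hh ((Ok \<circ> P) y)" if hh: "hh \<in> Hinv K F" for hh y
  proof -
    have "inner hh ((Ok \<circ> P) y) = inner (Ok hh) (P y)" using wo(2) by simp
    also have "\<dots> = inner hh (P y)" using Ofix[OF hh] by simp
    also have "\<dots> = inner (P hh) y" using Psa by simp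
    also have "\<dots> = inner hh y" using Pfix hh HF by auto
    finally show ?thesis by simp
  qed
  have Qsa: "inner ((Ok \<circ> P) x) y = inner x ((Ok \<circ> P) y)" for x y
  proof -
    have "inner ((Ok \<circ> P) x) y = inner ((Ok \<circ> P) x) ((Ok \<circ> P) y)" using key[OF Qrange] .
    also have "\<dots> = inner ((Ok \<circ> P) y) ((Ok \<circ> P) x)" by (simp add: inner_commute)
    also have "\<dots> = inner ((Ok \<circ> P) y) x" using key[OF Qrange] by simp
    finally show ?thesis by (simp add: inner_commute)
  qed
  have Qbl: "bounded_linear (Ok \<circ> P)"
    using bounded_linear_compose[OF wo(1) Pbl] by (simp add: comp_def)
  have Q: "sa_projection_onto (Ok \<circ> P) (Hinv K F)"
    by (rule proj_intro[OF Qbl Qsa Qfix Qrange])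
  moreover have "k = n \<longrightarrow> Ok \<circ> P = P'"
  proof
    assume "k = n"
    then have "F = {0..n-1}" using n1 by (auto simp: F_def)
    with P_proj[OF U C WP'] have "sa_projection_onto P' (Hinv K F)" by simp
    with Q show "Ok \<circ> P = P'" by (rule proj_unique)
  qed
  ultimately show ?thesis using tgt by simp
qed

end
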